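(* Assume (H3) and (H0)–(H2). Let $u\in USC(\mathbb T^N;\mathbb R^m)$ be a bounded viscosity subsolution of the stationary system (S). Then $u$ is Lipschitz continuous on $\mathbb T^N$ with a constant $L$ depending only on $H_1,\dots,H_m$, $D$ and $|u|_\infty$. If moreover $\sum_{j=1}^m d_{ij}(x)=0$ for all $x\in\mathbb T^N$ and all $i$, and $D(x)$ is irreducible for all $x\in\mathbb T^N$, then $L$ can be chosen independent of $|u|_\infty$ (depending only on $H_1,\dots,H_m$ and $D$).
   Context: $\mathbb T^N=\mathbb R^N/\mathbb Z^N$; $D(x)=(d_{ij}(x))_{1\le i,j\le m}$. (H3): each $d_{ij}$ continuous on $\mathbb T^N$, $d_{ii}\ge0$, $d_{ij}\le0$ for $i\ne j$, $\sum_j d_{ij}\ge0$. Irreducible: for every proper subset $\mathcal I\subsetneq\{1,\dots,m\}$ there exist $i\in\mathcal I$, $j\notin\mathcal I$ with $d_{ij}(x)\ne0$. $H_i(x,p)=F_i(x,p)-f_i(x)$ with (H0) $f_i,F_i$ continuous, $1$-periodic in $x$; (H1) $F_i(x,\cdot)$ convex, coercive ($\inf_xF_i(x,p)\to\infty$ as $|p|\to\infty$), $F_i(x,p)\ge F_i(x,0)=0$; (H2) $f_i\ge0$. System (S): $H_i(x,Du_i)+\sum_j d_{ij}(x)u_j=0$ in $\mathbb T^N$, $1\le i\le m$; viscosity subsolution: $u$ USC and whenever $\phi\in C^1$ and $u_i-\phi$ has a local max at $x$, $H_i(x,D\phi(x))+\sum_j d_{ij}(x)u_j(x)\le 0$.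 *)

theory Defs
  imports "HOL-Analysis.Analysis"
begin

text \<open>The torus T^N = R^N / Z^N: functions on T^N are Z^N-periodic functions on R^N,
  with R^N rendered as real^'n (N = CARD('n)).\<close>

definition periodic :: "(real^'n \<Rightarrow> 'b) \<Rightarrow> bool" where
  "periodic g \<longleftrightarrow> (\<forall>x. \<forall>k::'n \<Rightarrow> int. g (x + (\<chi> i. of_int (k i))) = g x)"

definition usc :: "(real^'n \<Rightarrow> real) \<Rightarrow> bool" where
  "usc g \<longleftrightarrow> (\<forall>x. \<forall>a. g x < a \<longrightarrow> (\<forall>\<^sub>F y in at x. g y < a))"

definition C1_periodic :: "(real^'n \<Rightarrow> real) \<Rightarrow> (real^'n \<Rightarrow> real^'n) \<Rightarrow> bool" where
  "C1_periodic phi Dphi \<longleftrightarrow> periodic phi \<and> continuous_on UNIV Dphi \<and>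
     (\<forall>y. (phi has_derivative (\<lambda>h. Dphi y \<bullet> h)) (at y))"

definition local_max_at :: "(real^'n \<Rightarrow> real) \<Rightarrow> real^'n \<Rightarrow> bool" where
  "local_max_at g x \<longleftrightarrow> (\<exists>e>0. \<forall>y. dist y x < e \<longrightarrow> g y \<le> g x)"

definition visc_subsol ::
  "('m::finite \<Rightarrow> real^'n \<Rightarrow> real^'n \<Rightarrow> real) \<Rightarrow> ('m \<Rightarrow> 'm \<Rightarrow> real^'n \<Rightarrow> real)
    \<Rightarrow> ('m \<Rightarrow> real^'n \<Rightarrow> real) \<Rightarrow> bool" where
  "visc_subsol H d u \<longleftrightarrow> (\<forall>i. usc (u i)) \<and>
     (\<forall>i phi Dphi x. C1_periodic phi Dphi \<longrightarrow> local_max_at (\<lambda>y. u i y - phi y) x \<longrightarrow>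
        H i x (Dphi x) + (\<Sum>j\<in>UNIV. d i j x * u j x) \<le> 0)"

definition irreducible_at :: "('m::finite \<Rightarrow> 'm \<Rightarrow> real^'n \<Rightarrow> real) \<Rightarrow> real^'n \<Rightarrow> bool" where
  "irreducible_at d x \<longleftrightarrow> (\<forall>I. I \<noteq> {} \<and> I \<subset> UNIV \<longrightarrow> (\<exists>i\<in>I. \<exists>j. j \<notin> I \<and> d i j x \<noteq> 0))"

end

theory Submission
  imports Defs
begin

lemma sin3: fixes x :: real shows "\<bar>sin x - x\<bar> \<le> \<bar>x\<bar>^3/6"
proof -
  have "\<bar>sin x - (\<Sum>m<3. sin_coeff m * x ^ m)\<bar> \<le> inverse (fact 3) * \<bar>x\<bar> ^ 3"
    by (rule Maclaurin_sin_bound)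
  moreover have "(\<Sum>m<3. sin_coeff m * x ^ m) = x"
    by (simp add: numeral_3_eq_3 sin_coeff_def)
  moreover have "inverse (fact 3 :: real) = 1/6" by (simp add: fact_numeral)
  ultimately show ?thesis by simp
qed

lemma sin_lower: fixes x :: real assumes "\<bar>x\<bar> \<le> 1/5" shows "(sin x)^2 \<ge> (81/100) * x^2"
proof -
  have a: "\<bar>sin x - x\<bar> \<le> \<bar>x\<bar>^3/6" by (rule sin3)
  have "\<bar>x\<bar>^3/6 \<le> \<bar>x\<bar>/10"
  proof -
    have "\<bar>x\<bar>^2 \<le> (1/5)^2" using assms by (intro power_mono) auto
    hence "\<bar>x\<bar>^3 \<le> \<bar>x\<bar> * (1/25)"
    proof -
      have "\<bar>x\<bar>^3 = \<bar>x\<bar> * \<bar>x\<bar>^2" by (simp add: power3_eq_cube power2_eq_square)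
      also have "\<dots> \<le> \<bar>x\<bar> * (1/5)^2" using \<open>\<bar>x\<bar>^2 \<le> (1/5)^2\<close> by (intro mult_left_mono) auto
      finally show ?thesis by (simp add: power2_eq_square)
    qed
    thus ?thesis by simp
  qed
  hence "\<bar>sin x\<bar> \<ge> (9/10) * \<bar>x\<bar>" using a by linarith
  hence "((9/10) * \<bar>x\<bar>)^2 \<le> \<bar>sin x\<bar>^2" by (intro power_mono) auto
  hence "\<bar>sin x\<bar>^2 \<ge> ((9/10) * \<bar>x\<bar>)^2" by simp
  moreover have "((9/10) * \<bar>x\<bar>)^2 = (81/100) * x^2" by (simp add: power2_eq_square abs_mult_self_eq)
  ultimately show ?thesis by simp
qed

lemma trig_ineq:
  fixes p C P t :: real
  assumes C: "C \<ge> 0" and P: "\<bar>p\<bar> \<le> P" and t: "\<bar>t\<bar> \<le> 1/20"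
  shows "p*t + C*t^2 \<le> p * (sin(2*pi*t)/(2*pi)) + ((C+P)/pi^2) * (1 - cos(2*pi*t))"
proof -
  have pi4: "pi < 4" by (rule pi_less_4)
  have pi2: "pi \<ge> 2" by (rule pi_ge_two)
  have s: "\<bar>sin(2*pi*t) - 2*pi*t\<bar> \<le> \<bar>2*pi*t\<bar>^3/6" by (rule sin3)
  have e1: "\<bar>sin(2*pi*t)/(2*pi) - t\<bar> = \<bar>sin(2*pi*t) - 2*pi*t\<bar> / (2*pi)"
    using pi2 by (simp add: field_simps)
  have e2: "\<bar>2*pi*t\<bar>^3/6 / (2*pi) = (2*pi^2/3) * \<bar>t\<bar> * t^2"
    using pi2 by (simp add: field_simps power2_eq_square power3_eq_cube abs_mult)
  have "(2*pi^2/3) * \<bar>t\<bar> \<le> (2*16/3) * (1/20)"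
  proof (rule mult_mono)
    have "pi^2 \<le> 4^2" using pi4 pi2 by (intro power_mono) auto
    thus "2*pi^2/3 \<le> 2*16/3" by simp
  qed (use t in auto)
  hence "(2*pi^2/3) * \<bar>t\<bar> \<le> 1" by linarith
  hence "(2*pi^2/3) * \<bar>t\<bar> * t^2 \<le> 1 * t^2" by (intro mult_right_mono) auto
  hence st: "\<bar>sin(2*pi*t)/(2*pi) - t\<bar> \<le> t^2"
    using s e1 e2 pi2 by (smt (verit) divide_right_mono)
  have ps: "p * (sin(2*pi*t)/(2*pi)) - p*t \<ge> - (P * t^2)"
  proof -
    have "\<bar>p * (sin(2*pi*t)/(2*pi) - t)\<bar> \<le> P * t^2"
      unfolding abs_mult using st P by (intro mult_mono) auto
    thus ?thesis by (simp add: right_diff_distrib)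
  qed
  have q: "1 - cos(2*pi*t) = 2 * (sin (pi*t))^2"
    using cos_double_sin[of "pi*t"] by (simp add: mult.assoc)
  have "\<bar>pi*t\<bar> \<le> 1/5"
  proof -
    have "\<bar>pi*t\<bar> = pi * \<bar>t\<bar>" by (simp add: abs_mult)
    also have "\<dots> \<le> 4 * (1/20)" using pi4 t by (intro mult_mono) auto
    finally show ?thesis by simp
  qed
  hence "(sin (pi*t))^2 \<ge> (81/100) * (pi*t)^2" by (rule sin_lower)
  hence "1 - cos(2*pi*t) \<ge> 2 * ((81/100) * (pi*t)^2)" using q by simp
  moreover have "(pi*t)^2 = pi^2*t^2" by (simp add: power_mult_distrib)
  moreover have "pi^2*t^2 \<ge> 0" by simp
  ultimately have "1 - cos(2*pi*t) \<ge> pi^2 * t^2" by linarith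
  moreover have "(C+P)/pi^2 \<ge> 0" using C P by auto
  ultimately have "((C+P)/pi^2) * (1 - cos(2*pi*t)) \<ge> ((C+P)/pi^2) * (pi^2 * t^2)"
    by (intro mult_left_mono) auto
  also have "((C+P)/pi^2) * (pi^2 * t^2) = (C+P) * t^2" using pi2 by (simp add: field_simps)
  finally have "((C+P)/pi^2) * (1 - cos(2*pi*t)) \<ge> (C+P) * t^2" .
  thus ?thesis using ps by (simp add: algebra_simps)
qed

lemma sin_per: "sin (2*pi*(a + of_int n - b)) = sin (2*pi*(a - b))"
proof -
  have "2*pi*(a + of_int n - b) = 2*pi*(a-b) + (2*pi) * of_int n" by (simp add: algebra_simps)
  hence "sin (2*pi*(a + of_int n - b)) = sin (2*pi*(a-b) + (2*pi) * of_int n)" by simp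
  also have "\<dots> = sin (2*pi*(a-b))" by (simp only: sin_add sin_int_2pin cos_int_2pin mult_1_right mult_zero_right add_0_right diff_0_right)
  finally show ?thesis .
qed

lemma cos_per: "cos (2*pi*(a + of_int n - b)) = cos (2*pi*(a - b))"
proof -
  have "2*pi*(a + of_int n - b) = 2*pi*(a-b) + (2*pi) * of_int n" by (simp add: algebra_simps)
  hence "cos (2*pi*(a + of_int n - b)) = cos (2*pi*(a-b) + (2*pi) * of_int n)" by simp
  also have "\<dots> = cos (2*pi*(a-b))" by (simp only: cos_add sin_int_2pin cos_int_2pin mult_1_right mult_zero_right add_0_right diff_0_right)
  finally show ?thesis .
qed

definition phiT :: "real^'n \<Rightarrow> real \<Rightarrow> real^'n \<Rightarrow> real \<Rightarrow> real^'n \<Rightarrow> real" where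
  "phiT y0 c p E y = c + (\<Sum>k\<in>UNIV. p$k * (sin(2*pi*(y$k - y0$k))/(2*pi)) + E * (1 - cos(2*pi*(y$k - y0$k))))"

definition DphiT :: "real^'n \<Rightarrow> real^'n \<Rightarrow> real \<Rightarrow> real^'n \<Rightarrow> real^'n" where
  "DphiT y0 p E y = (\<chi> k. p$k * cos(2*pi*(y$k - y0$k)) + E * (2*pi) * sin(2*pi*(y$k - y0$k)))"

lemma DphiT_at: "DphiT y0 p E y0 = p"
  by (simp add: DphiT_def vec_eq_iff)

lemma phiT_at: "phiT y0 c p E y0 = c"
  by (simp add: phiT_def)

lemma phiT_C1: fixes y0 :: "real^'n" shows "C1_periodic (phiT y0 c p E) (DphiT y0 p E)"
  unfolding C1_periodic_def
proof (intro conjI allI)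
  show "periodic (phiT y0 c p E)"
    unfolding periodic_def
  proof (intro allI)
    fix x :: "real^'n" and kk :: "'n \<Rightarrow> int"
    have "\<And>k::'n. sin (2*pi*((x + (\<chi> i. of_int (kk i)))$k - y0$k)) = sin (2*pi*(x$k - y0$k))"
      by (simp add: sin_per)
    moreover have "\<And>k::'n. cos (2*pi*((x + (\<chi> i. of_int (kk i)))$k - y0$k)) = cos (2*pi*(x$k - y0$k))"
      by (simp add: cos_per)
    ultimately show "phiT y0 c p E (x + (\<chi> i. of_int (kk i))) = phiT y0 c p E x"
      unfolding phiT_def by simp
  qed
  show "continuous_on UNIV (DphiT y0 p E)"
    unfolding DphiT_def by (intro continuous_on_vec_lambda continuous_intros)
  fix y :: "real^'n"
  show "(phiT y0 c p E has_derivative (\<lambda>h. DphiT y0 p E y \<bullet> h)) (at y)"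
  proof -
    define g where "g = (\<lambda>k::'n. \<lambda>t::real. p$k * (sin(2*pi*t)/(2*pi)) + E * (1 - cos(2*pi*t)))"
    define g' where "g' = (\<lambda>k::'n. \<lambda>t::real. p$k * cos(2*pi*t) + E * (2*pi) * sin(2*pi*t))"
    have gd: "(g k has_real_derivative g' k t) (at t)" for k t
      unfolding g_def g'_def
      by (auto intro!: derivative_eq_intros)
    have ld: "((\<lambda>y::real^'n. y$k - y0$k) has_derivative (\<lambda>h. h$k)) (at y)" for k
    proof -
      have "((\<lambda>y::real^'n. y$k) has_derivative (\<lambda>h. h$k)) (at y)"
        by (rule bounded_linear_imp_has_derivative) (rule bounded_linear_vec_nth)
      thus ?thesis using has_derivative_diff[OF _ has_derivative_const] by fastforce
    qed
    have kd: "((\<lambda>y::real^'n. g k (y$k - y0$k)) has_derivative (\<lambda>h. g' k (y$k - y0$k) * (h$k))) (at y)" for k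
      using has_derivative_compose[OF ld has_field_derivative_imp_has_derivative[OF gd]] .
    have "((\<lambda>y::real^'n. c + (\<Sum>k\<in>UNIV. g k (y$k - y0$k))) has_derivative (\<lambda>h. 0 + (\<Sum>k\<in>UNIV. g' k (y$k - y0$k) * (h$k)))) (at y)"
      by (intro has_derivative_add has_derivative_const has_derivative_sum kd)
    moreover have "(\<lambda>h. 0 + (\<Sum>k\<in>UNIV. g' k (y$k - y0$k) * (h$k))) = (\<lambda>h. DphiT y0 p E y \<bullet> h)"
      by (simp add: DphiT_def inner_vec_def g'_def)
    ultimately show ?thesis unfolding phiT_def g_def by simp
  qed
qed

lemma touch:
  fixes v g :: "real^'n \<Rightarrow> real" and y0 p :: "real^'n"
  assumes lm: "local_max_at (\<lambda>y. v y - g y) y0" and C: "C \<ge> 0" and d: "\<delta> > 0"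
    and bnd: "\<forall>h. norm h < \<delta> \<longrightarrow> g (y0 + h) \<le> g y0 + p \<bullet> h + C * (norm h)^2"
  shows "local_max_at (\<lambda>y. v y - phiT y0 (g y0) p ((C + norm p)/pi^2) y) y0"
proof -
  from lm obtain e where e: "e>0" "\<forall>y. dist y y0 < e \<longrightarrow> v y - g y \<le> v y0 - g y0"
    unfolding local_max_at_def by auto
  let ?E = "(C + norm p)/pi^2"
  have key: "g y \<le> phiT y0 (g y0) p ?E y" if "dist y y0 < min \<delta> (1/20)" for y
  proof -
    define h where "h = y - y0"
    have hn: "norm h < \<delta>" "norm h < 1/20" using that by (auto simp: h_def dist_norm)
    have n2: "(norm h)^2 = (\<Sum>k\<in>UNIV. (h$k)^2)"
    proof -
      have "(norm h)^2 = h \<bullet> h" by (rule power2_norm_eq_inner)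
      also have "\<dots> = (\<Sum>k\<in>UNIV. (h$k)^2)" by (simp add: inner_vec_def power2_eq_square)
      finally show ?thesis .
    qed
    have gy: "g y \<le> g y0 + p \<bullet> h + C * (norm h)^2" using bnd hn unfolding h_def
      by (metis add.commute diff_add_cancel)
    have "p \<bullet> h + C * (norm h)^2 = (\<Sum>k\<in>UNIV. p$k * h$k + C * (h$k)^2)"
      unfolding n2 by (simp add: inner_vec_def sum.distrib sum_distrib_left)
    also have "\<dots> \<le> (\<Sum>k\<in>UNIV. p$k * (sin(2*pi*(y$k - y0$k))/(2*pi)) + ?E * (1 - cos(2*pi*(y$k - y0$k))))"
    proof (rule sum_mono)
      fix k
      have "\<bar>h$k\<bar> \<le> 1/20" using component_le_norm_cart[of h k] hn by auto
      moreover have "\<bar>p$k\<bar> \<le> norm p" by (rule component_le_norm_cart)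
      ultimately show "p$k * h$k + C * (h$k)^2 \<le> p$k * (sin(2*pi*(y$k - y0$k))/(2*pi)) + ?E * (1 - cos(2*pi*(y$k - y0$k)))"
        using trig_ineq[OF C, of "p$k" "norm p" "h$k"] by (simp add: h_def)
    qed
    finally have "p \<bullet> h + C * (norm h)^2 \<le> (\<Sum>k\<in>UNIV. p$k * (sin(2*pi*(y$k - y0$k))/(2*pi)) + ?E * (1 - cos(2*pi*(y$k - y0$k))))" .
    thus ?thesis using gy unfolding phiT_def by linarith
  qed
  show ?thesis unfolding local_max_at_def
  proof (intro exI[of _ "min e (min \<delta> (1/20))"] conjI allI impI)
    show "min e (min \<delta> (1/20)) > 0" using e d by auto
    fix y assume a: "dist y y0 < min e (min \<delta> (1/20))"
    then have "v y - g y \<le> v y0 - g y0" using e by auto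
    moreover have "g y \<le> phiT y0 (g y0) p ?E y" using key a by auto
    ultimately show "v y - phiT y0 (g y0) p ?E y \<le> v y0 - phiT y0 (g y0) p ?E y0"
      using phiT_at[of y0 "g y0" p ?E] by simp
  qed
qed

lemma usc_open:
  fixes w :: "real^'n \<Rightarrow> real"
  assumes "usc w" shows "open {y. w y < a}"
proof (subst open_subopen, intro ballI)
  fix x assume "x \<in> {y. w y < a}"
  hence "w x < a" by simp
  hence "\<forall>\<^sub>F y in at x. w y < a" using assms unfolding usc_def by auto
  hence "\<forall>\<^sub>F y in nhds x. w y < a" using \<open>w x < a\<close> by (simp add: eventually_nhds_conv_at)
  then obtain T where "open T" "x \<in> T" "\<forall>y\<in>T. w y < a" unfolding eventually_nhds by auto
  thus "\<exists>T. open T \<and> x \<in> T \<and> T \<subseteq> {y. w y < a}" by auto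
qed

lemma usc_diff:
  fixes v c :: "real^'n \<Rightarrow> real"
  assumes "usc v" "continuous_on UNIV c" shows "usc (\<lambda>y. v y - c y)"
  unfolding usc_def
proof (intro allI impI)
  fix x a assume a: "v x - c x < a"
  define e where "e = (a - (v x - c x))/2"
  have e: "e > 0" using a by (simp add: e_def)
  have "\<forall>\<^sub>F y in at x. v y < v x + e" using assms(1) e unfolding usc_def by auto
  moreover have "(c \<longlongrightarrow> c x) (at x)" using assms(2) by (simp add: continuous_on_def)
  hence "\<forall>\<^sub>F y in at x. dist (c y) (c x) < e" using e by (rule tendstoD)
  ultimately show "\<forall>\<^sub>F y in at x. v y - c y < a"
  proof eventually_elim
    case (elim y)
    hence "c x - c y < e" "v y < v x + e" by (auto simp: dist_real_def abs_less_iff)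
    moreover have "2*e = a - (v x - c x)" using e_def by simp
    ultimately show ?case by linarith
  qed
qed

lemma usc_max_compact:
  fixes w :: "real^'n \<Rightarrow> real"
  assumes u: "usc w" and S: "compact S" "S \<noteq> {}"
  shows "\<exists>y\<in>S. \<forall>z\<in>S. w z \<le> w y"
proof (rule ccontr)
  assume "\<not> ?thesis"
  hence "\<forall>y\<in>S. \<exists>z\<in>S. w y < w z" by (auto simp: not_le)
  then obtain z where z: "\<And>y. y \<in> S \<Longrightarrow> z y \<in> S \<and> w y < w (z y)" by metis
  have cov: "S \<subseteq> (\<Union>y\<in>S. {t. w t < w (z y)})" using z by auto
  obtain C' where C': "C' \<subseteq> S" "finite C'" "S \<subseteq> (\<Union>y\<in>C'. {t. w t < w (z y)})"
    using compactE_image[OF S(1) _ cov] usc_open[OF u] by metis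
  have "C' \<noteq> {}" using C' S(2) by auto
  define m where "m = Max ((\<lambda>y. w (z y)) ` C')"
  have "m \<in> (\<lambda>y. w (z y)) ` C'" unfolding m_def using C' \<open>C' \<noteq> {}\<close> by (intro Max_in) auto
  then obtain y1 where y1: "y1 \<in> C'" "w (z y1) = m" by auto
  have "z y1 \<in> S" using z y1 C' by auto
  then obtain y2 where y2: "y2 \<in> C'" "w (z y1) < w (z y2)" using C' by auto
  have "w (z y2) \<le> m" unfolding m_def using C' y2 by (intro Max_ge) auto
  thus False using y1 y2 by auto
qed

lemma glob_max:
  fixes w :: "real^'n \<Rightarrow> real"
  assumes u: "usc w" and out: "\<forall>y. dist y x0 > \<rho> \<longrightarrow> w y < w x0"
  shows "\<exists>ys. \<forall>y. w y \<le> w ys"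
proof -
  have "0 \<le> \<rho>"
  proof (rule ccontr)
    assume "\<not> 0 \<le> \<rho>"
    hence "dist x0 x0 > \<rho>" by simp
    hence "w x0 < w x0" using out by blast
    thus False by simp
  qed
  hence "x0 \<in> cball x0 \<rho>" by simp
  then obtain ys where ys: "ys \<in> cball x0 \<rho>" "\<forall>z\<in>cball x0 \<rho>. w z \<le> w ys"
    using usc_max_compact[OF u compact_cball, of x0 \<rho>] by auto
  have "w y \<le> w ys" for y
  proof (cases "y \<in> cball x0 \<rho>")
    case True thus ?thesis using ys by auto
  next
    case False
    hence "w y < w x0" using out by (auto simp: dist_commute)
    also have "w x0 \<le> w ys" using ys \<open>x0 \<in> cball x0 \<rho>\<close> by auto
    finally show ?thesis by simp
  qed
  thus ?thesis by auto
qed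

lemma norm_touch:
  fixes z h :: "real^'n"
  assumes r: "norm z > 0" and hr: "norm h < norm z"
  shows "norm (z + h) \<le> norm z + (z \<bullet> h)/norm z + (norm h)^2/(2*norm z)"
proof -
  define r where "r = norm z"
  define a where "a = (z \<bullet> h)/r + (norm h)^2/(2*r)"
  have rp: "r > 0" using r by (simp add: r_def)
  have "(-z) \<bullet> h \<le> r * norm h" unfolding r_def using norm_cauchy_schwarz[of "-z" h] by simp
  hence "z \<bullet> h \<ge> - (r * norm h)" by simp
  hence "(z \<bullet> h)/r \<ge> - norm h" using rp by (simp add: field_simps)
  moreover have "(norm h)^2/(2*r) \<ge> 0" using rp by simp
  ultimately have B: "r + a \<ge> 0" using hr unfolding a_def r_def by linarith
  have e1: "(norm (z+h))^2 = r^2 + 2*(z \<bullet> h) + (norm h)^2"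
    unfolding r_def power2_norm_eq_inner by (simp add: inner_add inner_commute)
  have e2: "(r + a)^2 = r^2 + 2*(z \<bullet> h) + (norm h)^2 + a^2"
    unfolding a_def using rp by (simp add: power2_eq_square field_simps)
  have "(norm (z+h))^2 \<le> (r + a)^2" using e1 e2 by simp
  hence "norm (z+h) \<le> r + a" using B by (rule power2_le_imp_le)
  thus ?thesis unfolding a_def r_def by simp
qed

lemma lipA:
  fixes v :: "real^'n \<Rightarrow> real"
  assumes u: "usc v" and M: "\<forall>x. \<bar>v x\<bar> \<le> M" and R: "R > 0"
    and T: "\<forall>phi Dphi x. C1_periodic phi Dphi \<longrightarrow> local_max_at (\<lambda>y. v y - phi y) x \<longrightarrow> norm (Dphi x) < R"
  shows "v y1 - v x0 \<le> R * dist y1 x0"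
proof (rule ccontr)
  assume "\<not> ?thesis"
  hence ass: "v y1 - v x0 > R * dist y1 x0" by simp
  define c where "c = (\<lambda>y. R * dist y x0)"
  have cc: "continuous_on UNIV c" unfolding c_def by (intro continuous_intros)
  have uw: "usc (\<lambda>y. v y - c y)" by (rule usc_diff[OF u cc])
  have out: "\<forall>y. dist y x0 > (2*M+1)/R \<longrightarrow> v y - c y < v x0 - c x0"
  proof (intro allI impI)
    fix y assume "dist y x0 > (2*M+1)/R"
    hence "R * dist y x0 > 2*M+1" using R by (simp add: field_simps)
    moreover have "v y \<le> M" "v x0 \<ge> -M" using M[rule_format, of y] M[rule_format, of x0] by auto
    ultimately show "v y - c y < v x0 - c x0" unfolding c_def by simp
  qed
  obtain ys where ys: "\<forall>y. v y - c y \<le> v ys - c ys" using glob_max[OF uw out] by auto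
  have "v ys - c ys > v x0 - c x0" using ys[rule_format, of y1] ass unfolding c_def by simp
  hence "ys \<noteq> x0" by auto
  define z where "z = ys - x0"
  define r where "r = norm z"
  have rp: "r > 0" using \<open>ys \<noteq> x0\<close> by (simp add: r_def z_def)
  define p where "p = (R/r) *\<^sub>R z"
  have lm: "local_max_at (\<lambda>y. v y - c y) ys" unfolding local_max_at_def using ys by (intro exI[of _ 1]) auto
  have bnd: "\<forall>h. norm h < r \<longrightarrow> c (ys + h) \<le> c ys + p \<bullet> h + (R/(2*r)) * (norm h)^2"
  proof (intro allI impI)
    fix h :: "real^'n" assume h: "norm h < r"
    have "c (ys + h) = R * norm (z + h)" unfolding c_def z_def by (simp add: dist_norm algebra_simps)
    also have "\<dots> \<le> R * (r + (z \<bullet> h)/r + (norm h)^2/(2*r))"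
      using norm_touch[of z h] rp h R unfolding r_def by (intro mult_left_mono) auto
    also have "\<dots> = c ys + p \<bullet> h + (R/(2*r)) * (norm h)^2"
    proof -
      have cys: "c ys = R*r" unfolding c_def r_def z_def by (simp add: dist_norm)
      have ph: "p \<bullet> h = (R/r)*(z \<bullet> h)" unfolding p_def by simp
      show ?thesis unfolding cys ph using rp by (simp add: field_simps)
    qed
    finally show "c (ys + h) \<le> c ys + p \<bullet> h + (R/(2*r)) * (norm h)^2" .
  qed
  have "local_max_at (\<lambda>y. v y - phiT ys (c ys) p ((R/(2*r) + norm p)/pi^2) y) ys"
    using touch[OF lm _ rp bnd] R rp by simp
  hence "norm (DphiT ys p ((R/(2*r) + norm p)/pi^2) ys) < R"
    using T phiT_C1 by blast
  hence "norm p < R" by (simp add: DphiT_at)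
  moreover have "norm p = R" unfolding p_def r_def using rp R unfolding r_def by simp
  ultimately show False by simp
qed

lemma per_reduce:
  fixes g :: "real^'n \<Rightarrow> 'b"
  assumes "periodic g" shows "\<exists>x'\<in>cbox 0 1. g x = g x'"
proof -
  define x' where "x' = x - (\<chi> i. of_int \<lfloor>x$i\<rfloor>)"
  have "\<forall>k::'n\<Rightarrow>int. g (x' + (\<chi> i. of_int (k i))) = g x'" using assms unfolding periodic_def by blast
  from this[rule_format, of "\<lambda>i. \<lfloor>x$i\<rfloor>"]
  have "g (x' + (\<chi> i. of_int \<lfloor>x$i\<rfloor>)) = g x'" .
  moreover have "x' + (\<chi> i. of_int \<lfloor>x$i\<rfloor>) = x" unfolding x'_def by simp
  moreover have "x' \<in> cbox 0 1" unfolding x'_def mem_box_cart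
    by (auto simp: of_int_floor_le) (smt (verit) real_of_int_floor_add_one_gt)
  ultimately show ?thesis by metis
qed

lemma per_bound:
  fixes g :: "real^'n \<Rightarrow> real"
  assumes "periodic g" "continuous_on UNIV g" shows "\<exists>B. \<forall>x. \<bar>g x\<bar> \<le> B"
proof -
  have "compact (g ` cbox 0 1)"
    using assms(2) by (intro compact_continuous_image) (auto intro: continuous_on_subset)
  then obtain B where B: "\<forall>y\<in>g ` cbox 0 1. norm y \<le> B" using compact_imp_bounded bounded_iff by metis
  have "\<bar>g x\<bar> \<le> B" for x
    using per_reduce[OF assms(1), of x] B by auto
  thus ?thesis by blast
qed

lemma per_pos:
  fixes g :: "real^'n \<Rightarrow> real"
  assumes "periodic g" "continuous_on UNIV g" "\<forall>x. g x > 0" shows "\<exists>e>0. \<forall>x. g x \<ge> e"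
proof -
  have "(0::real^'n) \<in> cbox 0 1" by (simp add: mem_box_cart)
  hence ne: "cbox (0::real^'n) 1 \<noteq> {}" by auto
  obtain x0 where x0: "x0 \<in> cbox 0 1" "\<forall>y\<in>cbox 0 1. g x0 \<le> g y"
    using continuous_attains_inf[OF compact_cbox ne continuous_on_subset[OF assms(2)]] by auto
  have "g x \<ge> g x0" for x using per_reduce[OF assms(1), of x] x0 by auto
  thus ?thesis using assms(3) by blast
qed

lemma osc_step:
  fixes a :: "'m::finite \<Rightarrow> 'm \<Rightarrow> real" and w :: "'m \<Rightarrow> real"
  assumes off: "\<forall>i j. i \<noteq> j \<longrightarrow> a i j \<le> 0" and sz: "\<forall>i. (\<Sum>j\<in>UNIV. a i j) = 0"
    and Ab: "\<forall>i j. \<bar>a i j\<bar> \<le> A" and ineq: "\<forall>i. (\<Sum>j\<in>UNIV. a i j * w j) \<le> B"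
    and top: "\<forall>l. w l \<le> w im" and t: "t \<ge> 0" and it: "w im - w i \<le> t"
    and ij: "- a i j \<ge> \<delta>" "i \<noteq> j" and dl: "\<delta> > 0" and A: "A \<ge> 0" and B: "B \<ge> 0"
  shows "w im - w j \<le> t + (B + real CARD('m) * A * t)/\<delta>"
proof -
  define T where "T = (\<lambda>l. (- a i l) * (w i - w l))"
  have sumT: "(\<Sum>l\<in>UNIV. T l) = (\<Sum>l\<in>UNIV. a i l * w l)"
  proof -
    have "(\<Sum>l\<in>UNIV. T l) = (\<Sum>l\<in>UNIV. a i l * w l) - w i * (\<Sum>l\<in>UNIV. a i l)"
      unfolding T_def by (simp add: algebra_simps sum_subtractf sum_distrib_left)
    thus ?thesis using sz by simp
  qed
  have Tl: "T l \<ge> - (A * t)" for l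
  proof (cases "l = i")
    case True thus ?thesis unfolding T_def using A t by simp
  next
    case False
    hence a0: "- a i l \<ge> 0" using off by auto
    have "w i - w l \<ge> - t" using top[rule_format, of l] it by linarith
    hence "(- a i l) * (w i - w l) \<ge> (- a i l) * (- t)" using a0 by (intro mult_left_mono) auto
    moreover have "(- a i l) * (- t) \<ge> - (A * t)"
    proof -
      have "a i l \<ge> - A" using Ab[rule_format, of i l] by linarith
      hence "a i l * t \<ge> (- A) * t" using t by (intro mult_right_mono) auto
      thus ?thesis by simp
    qed
    ultimately show ?thesis unfolding T_def by linarith
  qed
  have "(\<Sum>l\<in>UNIV. T l) = T j + (\<Sum>l\<in>UNIV - {j}. T l)"
    by (simp add: sum.remove)
  moreover have "(\<Sum>l\<in>UNIV - {j}. T l) \<ge> (\<Sum>l\<in>UNIV - {j}. - (A * t))"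
    using Tl by (intro sum_mono) auto
  moreover have "(\<Sum>l\<in>UNIV - {j}. - (A * t)) \<ge> - (real CARD('m) * A * t)"
  proof -
    have "card (UNIV - {j}) \<le> CARD('m)" by (rule card_mono) auto
    hence "real (card (UNIV - {j})) * (A * t) \<le> real CARD('m) * (A * t)"
      using A t by (intro mult_right_mono) auto
    thus ?thesis by simp
  qed
  ultimately have Tj: "T j \<le> B + real CARD('m) * A * t"
    using sumT ineq[rule_format, of i] by linarith
  have NAt: "real CARD('m) * A * t \<ge> 0" using A t by simp
  have "w i - w j \<le> (B + real CARD('m) * A * t)/\<delta>"
  proof (cases "w i - w j \<le> 0")
    case True
    moreover have "(B + real CARD('m) * A * t)/\<delta> \<ge> 0" using B NAt dl by simp
    ultimately show ?thesis by linarith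
  next
    case False
    hence "\<delta> * (w i - w j) \<le> (- a i j) * (w i - w j)" using ij by (intro mult_right_mono) auto
    hence "\<delta> * (w i - w j) \<le> B + real CARD('m) * A * t" using Tj unfolding T_def by linarith
    thus ?thesis using dl by (simp add: field_simps)
  qed
  thus ?thesis using it by linarith
qed

lemma osc_bound:
  fixes A B \<delta> :: real
  assumes A: "A \<ge> 0" and B: "B \<ge> 0" and dl: "\<delta> > 0"
  shows "\<exists>C. \<forall>(a::'m::finite \<Rightarrow> 'm \<Rightarrow> real) (w::'m \<Rightarrow> real).
     (\<forall>i j. i \<noteq> j \<longrightarrow> a i j \<le> 0) \<and> (\<forall>i. (\<Sum>j\<in>UNIV. a i j) = 0) \<and> (\<forall>i j. \<bar>a i j\<bar> \<le> A) \<and>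
     (\<forall>i. (\<Sum>j\<in>UNIV. a i j * w j) \<le> B) \<and>
     (\<forall>I. I \<noteq> {} \<and> I \<subset> UNIV \<longrightarrow> (\<exists>i\<in>I. \<exists>j. j \<notin> I \<and> - a i j \<ge> \<delta>))
     \<longrightarrow> (\<forall>i j. w i - w j \<le> C)"
proof -
  define N where "N = CARD('m)"
  define f where "f = (\<lambda>t::real. t + (B + real N * A * t)/\<delta>)"
  define c where "c = (\<lambda>k. (f ^^ k) 0)"
  have cS: "c (Suc k) = f (c k)" for k unfolding c_def by simp
  have c0: "c 0 = 0" unfolding c_def by simp
  have cpos: "c k \<ge> 0" for k
  proof (induction k)
    case 0 thus ?case by (simp add: c0)
  next
    case (Suc k)
    have "(B + real N * A * c k)/\<delta> \<ge> 0" using Suc A B dl by simp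
    thus ?case unfolding cS f_def using Suc by linarith
  qed
  have cmono: "c k \<le> c (Suc k)" for k
  proof -
    have "(B + real N * A * c k)/\<delta> \<ge> 0" using cpos[of k] A B dl by simp
    thus ?thesis unfolding cS f_def by linarith
  qed
  show ?thesis
  proof (rule exI[of _ "c (N - 1)"], intro allI impI, elim conjE)
    fix a :: "'m \<Rightarrow> 'm \<Rightarrow> real" and w :: "'m \<Rightarrow> real" and i0 j0 :: 'm
    assume off: "\<forall>i j. i \<noteq> j \<longrightarrow> a i j \<le> 0" and sz: "\<forall>i. (\<Sum>j\<in>UNIV. a i j) = 0"
      and Ab: "\<forall>i j. \<bar>a i j\<bar> \<le> A" and ineq: "\<forall>i. (\<Sum>j\<in>UNIV. a i j * w j) \<le> B"
      and irr: "\<forall>I. I \<noteq> {} \<and> I \<subset> UNIV \<longrightarrow> (\<exists>i\<in>I. \<exists>j. j \<notin> I \<and> - a i j \<ge> \<delta>)"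
    have "Max (range w) \<in> range w" by (intro Max_in) auto
    then obtain im where im: "w im = Max (range w)" by (metis imageE)
    have top: "\<forall>l. w l \<le> w im" unfolding im by (auto intro: Max_ge)
    define S where "S = (\<lambda>t. {i. w im - w i \<le> t})"
    have Smono: "S (c k) \<subseteq> S (c (Suc k))" for k using cmono[of k] unfolding S_def by auto
    have ind: "k < N \<longrightarrow> Suc k \<le> card (S (c k))" for k
    proof (induction k)
      case 0
      have "im \<in> S (c 0)" unfolding S_def c0 by simp
      hence "S (c 0) \<noteq> {}" by auto
      thus ?case by (simp add: card_gt_0_iff Suc_le_eq)
    next
      case (Suc k)
      show ?case
      proof
        assume sk: "Suc k < N"
        hence IH: "Suc k \<le> card (S (c k))" using Suc by simp
        show "Suc (Suc k) \<le> card (S (c (Suc k)))"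
        proof (cases "S (c k) = UNIV")
          case True
          hence "S (c (Suc k)) = UNIV" using Smono[of k] by auto
          thus ?thesis using sk unfolding N_def by simp
        next
          case False
          have "im \<in> S (c k)" unfolding S_def using cpos[of k] by simp
          hence "S (c k) \<noteq> {} \<and> S (c k) \<subset> UNIV" using False by auto
          then obtain i j where ij: "i \<in> S (c k)" "j \<notin> S (c k)" "- a i j \<ge> \<delta>" using irr by blast
          have "i \<noteq> j" using ij by auto
          have "w im - w j \<le> c k + (B + real CARD('m) * A * c k)/\<delta>"
          proof (rule osc_step[OF off sz Ab ineq top cpos[of k] _ ij(3) \<open>i \<noteq> j\<close> dl A B])
            show "w im - w i \<le> c k" using ij(1) unfolding S_def by simp
          qed
          hence "j \<in> S (c (Suc k))" unfolding S_def cS f_def N_def by simp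
          hence "insert j (S (c k)) \<subseteq> S (c (Suc k))" using Smono[of k] by auto
          hence "card (insert j (S (c k))) \<le> card (S (c (Suc k)))" by (intro card_mono) auto
          moreover have "card (insert j (S (c k))) = Suc (card (S (c k)))" using ij(2) by simp
          ultimately show ?thesis using IH by simp
        qed
      qed
    qed
    have "N > 0" unfolding N_def by simp
    hence "N \<le> card (S (c (N - 1)))" using ind[of "N - 1"] by simp
    moreover have "card (S (c (N - 1))) \<le> N" unfolding N_def by (rule card_mono) auto
    ultimately have "card (S (c (N - 1))) = card (UNIV::'m set)" unfolding N_def by simp
    hence Sall: "S (c (N - 1)) = UNIV" by (intro card_subset_eq) auto
    have "j0 \<in> S (c (N - 1))" using Sall by simp
    hence "w im - w j0 \<le> c (N - 1)" unfolding S_def by simp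
    thus "w i0 - w j0 \<le> c (N - 1)" using top[rule_format, of i0] by linarith
  qed
qed

lemma coer_lemma:
  fixes F :: "'m::finite \<Rightarrow> real^'n \<Rightarrow> real^'n \<Rightarrow> real"
  assumes coer: "\<And>i. filterlim (\<lambda>p. INF x. F i x p) at_top at_infinity"
    and pos: "\<forall>i x p. F i x p \<ge> 0"
  shows "\<exists>R>0. \<forall>i x p. norm p \<ge> R \<longrightarrow> F i x p > K"
proof -
  have "\<forall>i. \<exists>b. \<forall>p. b \<le> norm p \<longrightarrow> K + 1 \<le> (INF x. F i x p)"
  proof
    fix i
    have "\<forall>\<^sub>F p in at_infinity. K + 1 \<le> (INF x. F i x p)"
      using coer[of i] unfolding filterlim_at_top by blast
    thus "\<exists>b. \<forall>p. b \<le> norm p \<longrightarrow> K + 1 \<le> (INF x. F i x p)"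
      unfolding eventually_at_infinity by blast
  qed
  then obtain b where b: "\<And>i p. b i \<le> norm p \<Longrightarrow> K + 1 \<le> (INF x. F i x p)" by metis
  define R where "R = 1 + (\<Sum>i\<in>UNIV. \<bar>b i\<bar>)"
  have Rp: "R > 0" unfolding R_def by (simp add: sum_nonneg add_pos_nonneg)
  have "F i x p > K" if "norm p \<ge> R" for i x p
  proof -
    have "\<bar>b i\<bar> \<le> (\<Sum>i\<in>UNIV. \<bar>b i\<bar>)" by (rule member_le_sum) auto
    hence "b i \<le> norm p" using that unfolding R_def by linarith
    hence "K + 1 \<le> (INF x. F i x p)" by (rule b)
    also have "(INF x. F i x p) \<le> F i x p"
      by (rule cINF_lower) (auto intro!: bdd_belowI[of _ 0] simp: pos)
    finally show ?thesis by simp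
  qed
  thus ?thesis using Rp by blast
qed

lemma LIP1:
  fixes F :: "'m::finite \<Rightarrow> real^'n \<Rightarrow> real^'n \<Rightarrow> real" and f :: "'m \<Rightarrow> real^'n \<Rightarrow> real"
    and d :: "'m \<Rightarrow> 'm \<Rightarrow> real^'n \<Rightarrow> real"
  assumes coer: "\<And>i. filterlim (\<lambda>p. INF x. F i x p) at_top at_infinity"
    and pos: "\<forall>i x p. F i x p \<ge> 0"
  shows "\<exists>L. \<forall>u M. (\<forall>i x. \<bar>u i x\<bar> \<le> M) \<and> visc_subsol (\<lambda>i x p. F i x p - f i x) d u \<and>
            (\<forall>i x. f i x - (\<Sum>j\<in>UNIV. d i j x * u j x) \<le> K)
          \<longrightarrow> (\<forall>i x y. \<bar>u i x - u i y\<bar> \<le> L * dist x y)"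
proof -
  obtain R where R: "R > 0" "\<forall>i x p. norm p \<ge> R \<longrightarrow> F i x p > K"
    using coer_lemma[OF coer pos] by blast
  show ?thesis
  proof (intro exI[of _ R] allI impI)
    fix u :: "'m \<Rightarrow> real^'n \<Rightarrow> real" and M :: real and i x y
    assume H: "(\<forall>i x. \<bar>u i x\<bar> \<le> M) \<and> visc_subsol (\<lambda>i x p. F i x p - f i x) d u \<and>
            (\<forall>i x. f i x - (\<Sum>j\<in>UNIV. d i j x * u j x) \<le> K)"
    hence bnd: "\<forall>x. \<bar>u i x\<bar> \<le> M" and vs: "visc_subsol (\<lambda>i x p. F i x p - f i x) d u"
      and KK: "\<forall>i x. f i x - (\<Sum>j\<in>UNIV. d i j x * u j x) \<le> K" by auto
    have us: "usc (u i)" using vs unfolding visc_subsol_def by blast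
    have T: "\<forall>phi Dphi x. C1_periodic phi Dphi \<longrightarrow> local_max_at (\<lambda>y. u i y - phi y) x \<longrightarrow> norm (Dphi x) < R"
    proof (intro allI impI)
      fix phi Dphi x assume c1: "C1_periodic phi Dphi" and lm: "local_max_at (\<lambda>y. u i y - phi y) x"
      have "F i x (Dphi x) - f i x + (\<Sum>j\<in>UNIV. d i j x * u j x) \<le> 0"
        using vs c1 lm unfolding visc_subsol_def by blast
      hence "F i x (Dphi x) \<le> K" using KK[rule_format, of i x] by linarith
      thus "norm (Dphi x) < R" using R(2) by (meson not_le not_less)
    qed
    have "u i x - u i y \<le> R * dist x y" by (rule lipA[OF us bnd R(1) T])
    moreover have "u i y - u i x \<le> R * dist y x" by (rule lipA[OF us bnd R(1) T])
    ultimately show "\<bar>u i x - u i y\<bar> \<le> R * dist x y" by (simp add: dist_commute)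
  qed
qed

lemma PW:
  fixes F :: "'m::finite \<Rightarrow> real^'n \<Rightarrow> real^'n \<Rightarrow> real" and f :: "'m \<Rightarrow> real^'n \<Rightarrow> real"
    and d :: "'m \<Rightarrow> 'm \<Rightarrow> real^'n \<Rightarrow> real" and u :: "'m \<Rightarrow> real^'n \<Rightarrow> real"
  assumes pos: "\<forall>i x p. F i x p \<ge> 0"
    and fc: "\<And>i. continuous_on UNIV (f i)" and dc: "\<And>i j. continuous_on UNIV (d i j)"
    and uc: "\<And>j. continuous_on UNIV (u j)" and bnd: "\<forall>i x. \<bar>u i x\<bar> \<le> M"
    and vs: "visc_subsol (\<lambda>i x p. F i x p - f i x) d u"
  shows "(\<Sum>j\<in>UNIV. d i j x * u j x) \<le> f i x"
proof -
  define G where "G = (\<lambda>y. f i y - (\<Sum>j\<in>UNIV. d i j y * u j y))"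
  have Gc: "continuous_on UNIV G" unfolding G_def
    by (intro continuous_intros fc dc uc)
  have M0: "M \<ge> 0" using bnd[rule_format, of i x] by linarith
  have us: "usc (u i)" using vs unfolding visc_subsol_def by blast
  have main: "G x > - \<delta>" if dl: "\<delta> > 0" for \<delta>
  proof -
    obtain \<eta> where eta: "\<eta> > 0" "\<forall>y. dist y x < \<eta> \<longrightarrow> dist (G y) (G x) < \<delta>"
      using Gc dl unfolding continuous_on_iff by (metis UNIV_I)
    define K where "K = (2*M+1)/\<eta>^2"
    have Kp: "K > 0" unfolding K_def using M0 eta by simp
    have Keta: "K * \<eta>^2 = 2*M+1" unfolding K_def using eta by simp
    define c where "c = (\<lambda>y. K * (norm (y - x))^2)"
    have cc: "continuous_on UNIV c" unfolding c_def by (intro continuous_intros)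
    have uw: "usc (\<lambda>y. u i y - c y)" by (rule usc_diff[OF us cc])
    have out: "\<forall>y. dist y x > \<eta> \<longrightarrow> u i y - c y < u i x - c x"
    proof (intro allI impI)
      fix y assume "dist y x > \<eta>"
      hence "(norm (y - x))^2 > \<eta>^2" using eta by (simp add: dist_norm power_strict_mono)
      hence "c y > K * \<eta>^2" unfolding c_def using Kp by simp
      moreover have "u i y \<le> M" "u i x \<ge> - M" using bnd[rule_format, of i y] bnd[rule_format, of i x] by auto
      moreover have "c x = 0" unfolding c_def by simp
      ultimately show "u i y - c y < u i x - c x" using Keta by linarith
    qed
    obtain ys where ys: "\<forall>y. u i y - c y \<le> u i ys - c ys" using glob_max[OF uw out] by auto
    have "u i ys - c ys \<ge> u i x" using ys[rule_format, of x] unfolding c_def by simp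
    moreover have "u i ys \<le> M" "u i x \<ge> - M" using bnd[rule_format, of i ys] bnd[rule_format, of i x] by auto
    ultimately have "K * (norm (ys - x))^2 < K * \<eta>^2" using Keta unfolding c_def by linarith
    hence "(norm (ys - x))^2 < \<eta>^2" using Kp by simp
    hence "norm (ys - x) < \<eta>" using eta by (simp add: power_less_imp_less_base)
    hence dG: "dist (G ys) (G x) < \<delta>" using eta by (simp add: dist_norm)
    define p where "p = (2*K) *\<^sub>R (ys - x)"
    have lm: "local_max_at (\<lambda>y. u i y - c y) ys" unfolding local_max_at_def using ys by (intro exI[of _ 1]) auto
    have bd: "\<forall>h. norm h < 1 \<longrightarrow> c (ys + h) \<le> c ys + p \<bullet> h + K * (norm h)^2"
    proof (intro allI impI)
      fix h :: "real^'n"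
      have nrm: "(norm (ys + h - x))^2 = (norm (ys - x))^2 + 2 * ((ys - x) \<bullet> h) + (norm h)^2"
      proof -
        have "ys + h - x = (ys - x) + h" by simp
        thus ?thesis unfolding power2_norm_eq_inner by (simp only:) (simp add: inner_add inner_commute)
      qed
      have e1: "c (ys + h) = K * ((norm (ys - x))^2 + 2 * ((ys - x) \<bullet> h) + (norm h)^2)"
        unfolding c_def using nrm by simp
      have e2: "c ys = K * (norm (ys - x))^2" unfolding c_def by simp
      have e3: "p \<bullet> h = 2*K*((ys - x) \<bullet> h)" unfolding p_def by simp
      show "c (ys + h) \<le> c ys + p \<bullet> h + K * (norm h)^2"
        unfolding e1 e2 e3 by (simp add: algebra_simps)
    qed
    have "local_max_at (\<lambda>y. u i y - phiT ys (c ys) p ((K + norm p)/pi^2) y) ys"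
      using touch[OF lm _ _ bd] Kp by simp
    hence "F i ys (DphiT ys p ((K + norm p)/pi^2) ys) - f i ys + (\<Sum>j\<in>UNIV. d i j ys * u j ys) \<le> 0"
      using vs phiT_C1 unfolding visc_subsol_def by blast
    hence "G ys \<ge> 0" unfolding G_def using pos by (smt (verit))
    thus ?thesis using dG unfolding dist_real_def by linarith
  qed
  have "G x \<ge> 0"
  proof (rule ccontr)
    assume "\<not> G x \<ge> 0"
    hence "- G x > 0" by simp
    from main[OF this] show False by simp
  qed
  thus ?thesis unfolding G_def by simp
qed

lemma UNIF:
  fixes d :: "'m::finite \<Rightarrow> 'm \<Rightarrow> real^'n \<Rightarrow> real"
  assumes dc: "\<And>i j. continuous_on UNIV (d i j)" and dp: "\<And>i j. periodic (d i j)"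
    and off: "\<And>i j x. i \<noteq> j \<Longrightarrow> d i j x \<le> 0" and irr: "\<forall>x. irreducible_at d x"
  shows "\<exists>\<delta>>0. \<forall>x I. I \<noteq> {} \<and> I \<subset> UNIV \<longrightarrow> (\<exists>i\<in>I. \<exists>j. j \<notin> I \<and> - d i j x \<ge> \<delta>)"
proof -
  define P where "P = {I::'m set. I \<noteq> {} \<and> I \<subset> UNIV}"
  define g where "g = (\<lambda>I x. \<Sum>i\<in>I. \<Sum>j\<in>UNIV - I. - d i j x)"
  have "\<forall>I\<in>P. \<exists>e>0. \<forall>x. g I x \<ge> e"
  proof
    fix I assume I: "I \<in> P"
    have gp: "periodic (g I)" using dp unfolding periodic_def g_def by simp
    have gc: "continuous_on UNIV (g I)" unfolding g_def by (intro continuous_intros dc)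
    have "g I x > 0" for x
    proof -
      obtain i j where ij: "i \<in> I" "j \<notin> I" "d i j x \<noteq> 0"
        using irr I unfolding irreducible_at_def P_def by blast
      have "i \<noteq> j" using ij by auto
      have nn: "- d i' j' x \<ge> 0" if "i' \<in> I" "j' \<in> UNIV - I" for i' j'
      proof -
        have "i' \<noteq> j'" using that by auto
        thus ?thesis using off[of i' j' x] by simp
      qed
      have pos: "- d i j x > 0" using off[OF \<open>i \<noteq> j\<close>, of x] ij(3) by linarith
      have s1: "(\<Sum>j\<in>UNIV - I. - d i j x) > 0"
        by (rule sum_pos2[where i=j]) (use pos ij(2) nn[OF ij(1)] in auto)
      have s2: "\<forall>i'\<in>I. (\<Sum>j\<in>UNIV - I. - d i' j x) \<ge> 0" using nn by (auto intro: sum_nonneg)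
      show ?thesis unfolding g_def by (rule sum_pos2[where i=i]) (use s1 s2 ij(1) in auto)
    qed
    thus "\<exists>e>0. \<forall>x. g I x \<ge> e" using per_pos[OF gp gc] by blast
  qed
  then obtain E where E: "\<And>I. I \<in> P \<Longrightarrow> E I > 0 \<and> (\<forall>x. g I x \<ge> E I)" by metis
  define m0 where "m0 = Min (insert 1 (E ` P))"
  have finP: "finite P" by simp
  have m0p: "m0 > 0" unfolding m0_def using E finP by (subst Min_gr_iff) auto
  have m0le: "m0 \<le> E I" if "I \<in> P" for I :: "'m set" unfolding m0_def using finP that by (intro Min_le) auto
  define N where "N = real CARD('m)"
  define \<delta> where "\<delta> = m0 / (N*N + 1)"
  have dp0: "\<delta> > 0" unfolding \<delta>_def using m0p by (simp add: add_nonneg_pos)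
  have NN: "N*N*\<delta> < m0"
  proof -
    have "N*N*\<delta> = m0 * (N*N/(N*N+1))" unfolding \<delta>_def by (simp add: field_simps)
    also have "\<dots> < m0 * 1"
    proof -
      have "N*N+1 > 0" by (simp add: add_nonneg_pos)
      hence "N*N/(N*N+1) < 1" by (simp add: divide_less_eq)
      thus ?thesis using m0p by (intro mult_strict_left_mono) auto
    qed
    finally show ?thesis by simp
  qed
  have "\<forall>x I. I \<noteq> {} \<and> I \<subset> UNIV \<longrightarrow> (\<exists>i\<in>I. \<exists>j. j \<notin> I \<and> - d i j x \<ge> \<delta>)"
  proof (intro allI impI)
    fix x and I :: "'m set" assume "I \<noteq> {} \<and> I \<subset> UNIV"
    hence IP: "I \<in> P" unfolding P_def by simp
    show "\<exists>i\<in>I. \<exists>j. j \<notin> I \<and> - d i j x \<ge> \<delta>"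
    proof (rule ccontr)
      assume "\<not> ?thesis"
      hence lt: "\<And>i j. i \<in> I \<Longrightarrow> j \<in> UNIV - I \<Longrightarrow> - d i j x \<le> \<delta>" by force
      have "g I x \<le> (\<Sum>i\<in>I. \<Sum>j\<in>UNIV - I. \<delta>)" unfolding g_def
        by (intro sum_mono) (use lt in auto)
      also have "\<dots> = real (card I) * (real (card (UNIV - I)) * \<delta>)" by simp
      also have "\<dots> \<le> N * (N * \<delta>)"
      proof -
        have "card I \<le> CARD('m)" "card (UNIV - I) \<le> CARD('m)" by (auto intro: card_mono)
        thus ?thesis unfolding N_def using dp0 by (intro mult_mono) auto
      qed
      finally have "g I x < m0" using NN by (simp add: mult.assoc)
      moreover have "E I \<le> g I x" using E[OF IP] by blast
      ultimately show False using m0le[OF IP] by linarith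
    qed
  qed
  thus ?thesis using dp0 by blast
qed

lemma sum_bound:
  fixes a b :: "'m::finite \<Rightarrow> real"
  assumes "\<forall>j. \<bar>a j\<bar> \<le> A" "\<forall>j. \<bar>b j\<bar> \<le> Mb"
  shows "\<bar>\<Sum>j\<in>UNIV. a j * b j\<bar> \<le> real CARD('m) * A * Mb"
proof -
  have "\<bar>\<Sum>j\<in>UNIV. a j * b j\<bar> \<le> (\<Sum>j\<in>UNIV. \<bar>a j * b j\<bar>)" by (rule sum_abs)
  also have "\<dots> \<le> (\<Sum>j\<in>(UNIV::'m set). A * Mb)"
  proof (rule sum_mono)
    fix j
    show "\<bar>a j * b j\<bar> \<le> A * Mb" unfolding abs_mult using assms by (intro mult_mono') auto
  qed
  also have "\<dots> = real CARD('m) * A * Mb" by simp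
  finally show ?thesis .
qed

theorem lemma3p4:
  fixes F :: "'m::finite \<Rightarrow> real^'n \<Rightarrow> real^'n \<Rightarrow> real"
    and f :: "'m \<Rightarrow> real^'n \<Rightarrow> real"
    and d :: "'m \<Rightarrow> 'm \<Rightarrow> real^'n \<Rightarrow> real"
  assumes H0F: "\<And>i. continuous_on UNIV (\<lambda>(x, p). F i x p)"
    and H0Fp: "\<And>i p. periodic (\<lambda>x. F i x p)"
    and H0f: "\<And>i. continuous_on UNIV (f i)"
    and H0fp: "\<And>i. periodic (f i)"
    and H1conv: "\<And>i x. convex_on UNIV (F i x)"
    and H1coer: "\<And>i. filterlim (\<lambda>p. INF x. F i x p) at_top at_infinity"
    and H1pos: "\<And>i x p. F i x p \<ge> F i x 0"
    and H1zero: "\<And>i x. F i x 0 = 0"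
    and H2: "\<And>i x. f i x \<ge> 0"
    and H3cont: "\<And>i j. continuous_on UNIV (d i j)"
    and H3per: "\<And>i j. periodic (d i j)"
    and H3diag: "\<And>i x. d i i x \<ge> 0"
    and H3off: "\<And>i j x. i \<noteq> j \<Longrightarrow> d i j x \<le> 0"
    and H3sum: "\<And>i x. (\<Sum>j\<in>UNIV. d i j x) \<ge> 0"
  shows "(\<forall>M. \<exists>L. \<forall>u. (\<forall>i. periodic (u i)) \<and> (\<forall>i x. \<bar>u i x\<bar> \<le> M) \<and>
              visc_subsol (\<lambda>i x p. F i x p - f i x) d u \<longrightarrow>
              (\<forall>i x y. \<bar>u i x - u i y\<bar> \<le> L * dist x y))
       \<and> ((\<forall>i x. (\<Sum>j\<in>UNIV. d i j x) = 0) \<and> (\<forall>x. irreducible_at d x) \<longrightarrow>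
          (\<exists>L. \<forall>u. (\<forall>i. periodic (u i)) \<and> (\<exists>M. \<forall>i x. \<bar>u i x\<bar> \<le> M) \<and>
              visc_subsol (\<lambda>i x p. F i x p - f i x) d u \<longrightarrow>
              (\<forall>i x y. \<bar>u i x - u i y\<bar> \<le> L * dist x y)))"
proof -
  have pos: "\<forall>i x p. F i x p \<ge> 0" using H1pos H1zero by metis
  have "\<forall>i. \<exists>B. \<forall>x. \<bar>f i x\<bar> \<le> B" using per_bound H0fp H0f by blast
  then obtain Bf where Bf: "\<And>i x. \<bar>f i x\<bar> \<le> Bf i" by metis
  define Fm where "Fm = (\<Sum>i\<in>UNIV. \<bar>Bf i\<bar>)"
  have fFm: "f i x \<le> Fm" for i x
  proof -
    have "\<bar>Bf i\<bar> \<le> Fm" unfolding Fm_def by (rule member_le_sum) auto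
    thus ?thesis using Bf[of i x] by linarith
  qed
  have Fm0: "Fm \<ge> 0" unfolding Fm_def by (simp add: sum_nonneg)
  have "\<forall>i j. \<exists>B. \<forall>x. \<bar>d i j x\<bar> \<le> B" using per_bound H3per H3cont by blast
  then obtain Bd where Bd: "\<And>i j x. \<bar>d i j x\<bar> \<le> Bd i j" by metis
  define A where "A = (\<Sum>i\<in>UNIV. \<Sum>j\<in>UNIV. \<bar>Bd i j\<bar>)"
  have dA: "\<bar>d i j x\<bar> \<le> A" for i j x
  proof -
    have "\<bar>Bd i j\<bar> \<le> (\<Sum>j\<in>UNIV. \<bar>Bd i j\<bar>)" by (rule member_le_sum) auto
    also have "\<dots> \<le> A" unfolding A_def by (rule member_le_sum[where f="\<lambda>i. \<Sum>j\<in>UNIV. \<bar>Bd i j\<bar>"]) (auto intro: sum_nonneg)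
    finally show ?thesis using Bd[of i j x] by linarith
  qed
  have A0: "A \<ge> 0" unfolding A_def by (simp add: sum_nonneg)
  have part1: "\<forall>M. \<exists>L. \<forall>u. (\<forall>i. periodic (u i)) \<and> (\<forall>i x. \<bar>u i x\<bar> \<le> M) \<and>
              visc_subsol (\<lambda>i x p. F i x p - f i x) d u \<longrightarrow>
              (\<forall>i x y. \<bar>u i x - u i y\<bar> \<le> L * dist x y)"
  proof
    fix M :: real
    define K where "K = Fm + real CARD('m) * A * \<bar>M\<bar>"
    obtain L where L: "\<forall>u M. (\<forall>i x. \<bar>u i x\<bar> \<le> M) \<and> visc_subsol (\<lambda>i x p. F i x p - f i x) d u \<and>
            (\<forall>i x. f i x - (\<Sum>j\<in>UNIV. d i j x * u j x) \<le> K)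
          \<longrightarrow> (\<forall>i x y. \<bar>u i x - u i y\<bar> \<le> L * dist x y)"
      using LIP1[OF H1coer pos, of f d K] by blast
    show "\<exists>L. \<forall>u. (\<forall>i. periodic (u i)) \<and> (\<forall>i x. \<bar>u i x\<bar> \<le> M) \<and>
              visc_subsol (\<lambda>i x p. F i x p - f i x) d u \<longrightarrow>
              (\<forall>i x y. \<bar>u i x - u i y\<bar> \<le> L * dist x y)"
    proof (rule exI[of _ L], rule allI, rule impI)
      fix u assume H: "(\<forall>i. periodic (u i)) \<and> (\<forall>i x. \<bar>u i x\<bar> \<le> M) \<and>
              visc_subsol (\<lambda>i x p. F i x p - f i x) d u"
      have KK: "\<forall>i x. f i x - (\<Sum>j\<in>UNIV. d i j x * u j x) \<le> K"
      proof (intro allI)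
        fix i x
        have "\<bar>\<Sum>j\<in>UNIV. d i j x * u j x\<bar> \<le> real CARD('m) * A * \<bar>M\<bar>"
        proof (rule sum_bound)
          show "\<forall>j. \<bar>d i j x\<bar> \<le> A" using dA by blast
          show "\<forall>j. \<bar>u j x\<bar> \<le> \<bar>M\<bar>" using H by (meson abs_ge_self order_trans)
        qed
        thus "f i x - (\<Sum>j\<in>UNIV. d i j x * u j x) \<le> K" unfolding K_def using fFm[of i x] by linarith
      qed
      show "\<forall>i x y. \<bar>u i x - u i y\<bar> \<le> L * dist x y" using L H KK by blast
    qed
  qed
  have part2: "(\<forall>i x. (\<Sum>j\<in>UNIV. d i j x) = 0) \<and> (\<forall>x. irreducible_at d x) \<longrightarrow>
          (\<exists>L. \<forall>u. (\<forall>i. periodic (u i)) \<and> (\<exists>M. \<forall>i x. \<bar>u i x\<bar> \<le> M) \<and>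
              visc_subsol (\<lambda>i x p. F i x p - f i x) d u \<longrightarrow>
              (\<forall>i x y. \<bar>u i x - u i y\<bar> \<le> L * dist x y))"
  proof
    assume Z: "(\<forall>i x. (\<Sum>j\<in>UNIV. d i j x) = 0) \<and> (\<forall>x. irreducible_at d x)"
    obtain \<delta> where dl: "\<delta> > 0" "\<forall>x I. I \<noteq> {} \<and> I \<subset> UNIV \<longrightarrow> (\<exists>i\<in>I. \<exists>j. j \<notin> I \<and> - d i j x \<ge> \<delta>)"
      using UNIF[where d=d, OF H3cont H3per H3off] Z by blast
    obtain C0 where C0: "\<forall>(a::'m \<Rightarrow> 'm \<Rightarrow> real) (w::'m \<Rightarrow> real).
     (\<forall>i j. i \<noteq> j \<longrightarrow> a i j \<le> 0) \<and> (\<forall>i. (\<Sum>j\<in>UNIV. a i j) = 0) \<and> (\<forall>i j. \<bar>a i j\<bar> \<le> A) \<and>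
     (\<forall>i. (\<Sum>j\<in>UNIV. a i j * w j) \<le> Fm) \<and>
     (\<forall>I. I \<noteq> {} \<and> I \<subset> UNIV \<longrightarrow> (\<exists>i\<in>I. \<exists>j. j \<notin> I \<and> - a i j \<ge> \<delta>))
     \<longrightarrow> (\<forall>i j. w i - w j \<le> C0)"
      using osc_bound[OF A0 Fm0 dl(1)] by blast
    define K2 where "K2 = Fm + real CARD('m) * A * C0"
    obtain L2 where L2: "\<forall>u M. (\<forall>i x. \<bar>u i x\<bar> \<le> M) \<and> visc_subsol (\<lambda>i x p. F i x p - f i x) d u \<and>
            (\<forall>i x. f i x - (\<Sum>j\<in>UNIV. d i j x * u j x) \<le> K2)
          \<longrightarrow> (\<forall>i x y. \<bar>u i x - u i y\<bar> \<le> L2 * dist x y)"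
      using LIP1[OF H1coer pos, of f d K2] by blast
    show "\<exists>L. \<forall>u. (\<forall>i. periodic (u i)) \<and> (\<exists>M. \<forall>i x. \<bar>u i x\<bar> \<le> M) \<and>
              visc_subsol (\<lambda>i x p. F i x p - f i x) d u \<longrightarrow>
              (\<forall>i x y. \<bar>u i x - u i y\<bar> \<le> L * dist x y)"
    proof (rule exI[of _ L2], rule allI, rule impI)
      fix u assume H: "(\<forall>i. periodic (u i)) \<and> (\<exists>M. \<forall>i x. \<bar>u i x\<bar> \<le> M) \<and>
              visc_subsol (\<lambda>i x p. F i x p - f i x) d u"
      then obtain M where M: "\<forall>i x. \<bar>u i x\<bar> \<le> M" by blast
      have vs: "visc_subsol (\<lambda>i x p. F i x p - f i x) d u" using H by blast
      obtain L1 where L1: "\<forall>i x y. \<bar>u i x - u i y\<bar> \<le> L1 * dist x y"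
        using part1[rule_format, of M] H M by blast
      have uc: "continuous_on UNIV (u j)" for j
      proof -
        have "(\<bar>L1\<bar>)-lipschitz_on UNIV (u j)" unfolding lipschitz_on_def
        proof (intro conjI ballI)
          fix x y :: "real^'n"
          have "\<bar>u j x - u j y\<bar> \<le> L1 * dist x y" using L1 by blast
          also have "\<dots> \<le> \<bar>L1\<bar> * dist x y" by (intro mult_right_mono) auto
          finally show "dist (u j x) (u j y) \<le> \<bar>L1\<bar> * dist x y" by (simp add: dist_real_def)
        qed simp
        thus ?thesis by (rule lipschitz_on_continuous_on)
      qed
      have pw: "(\<Sum>j\<in>UNIV. d i j x * u j x) \<le> f i x" for i x
        by (rule PW[OF pos H0f H3cont uc M vs])
      have osc: "u i x - u j x \<le> C0" for i j x
      proof -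
        have "(\<forall>i j. i \<noteq> j \<longrightarrow> d i j x \<le> 0) \<and> (\<forall>i. (\<Sum>j\<in>UNIV. d i j x) = 0) \<and> (\<forall>i j. \<bar>d i j x\<bar> \<le> A) \<and>
          (\<forall>i. (\<Sum>j\<in>UNIV. d i j x * u j x) \<le> Fm) \<and>
          (\<forall>I. I \<noteq> {} \<and> I \<subset> UNIV \<longrightarrow> (\<exists>i\<in>I. \<exists>j. j \<notin> I \<and> - d i j x \<ge> \<delta>))"
        proof (intro conjI)
          show "\<forall>i j. i \<noteq> j \<longrightarrow> d i j x \<le> 0" using H3off by blast
          show "\<forall>i. (\<Sum>j\<in>UNIV. d i j x) = 0" using Z by blast
          show "\<forall>i j. \<bar>d i j x\<bar> \<le> A" using dA by blast
          show "\<forall>i. (\<Sum>j\<in>UNIV. d i j x * u j x) \<le> Fm" using pw fFm order_trans by blast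
          show "\<forall>I. I \<noteq> {} \<and> I \<subset> UNIV \<longrightarrow> (\<exists>i\<in>I. \<exists>j. j \<notin> I \<and> - d i j x \<ge> \<delta>)"
            using dl(2) by blast
        qed
        from C0[rule_format, OF this] show ?thesis by blast
      qed
      have KK: "\<forall>i x. f i x - (\<Sum>j\<in>UNIV. d i j x * u j x) \<le> K2"
      proof (intro allI)
        fix i x
        have "(\<Sum>j\<in>UNIV. d i j x * u j x) = (\<Sum>j\<in>UNIV. d i j x * (u j x - u i x)) + u i x * (\<Sum>j\<in>UNIV. d i j x)"
          by (simp add: algebra_simps sum_subtractf sum_distrib_left sum_distrib_right)
        also have "\<dots> = (\<Sum>j\<in>UNIV. d i j x * (u j x - u i x))" using Z by simp
        finally have eq: "(\<Sum>j\<in>UNIV. d i j x * u j x) = (\<Sum>j\<in>UNIV. d i j x * (u j x - u i x))" .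
        have "\<bar>\<Sum>j\<in>UNIV. d i j x * (u j x - u i x)\<bar> \<le> real CARD('m) * A * C0"
        proof (rule sum_bound)
          show "\<forall>j. \<bar>d i j x\<bar> \<le> A" using dA by blast
          show "\<forall>j. \<bar>u j x - u i x\<bar> \<le> C0" using osc by (simp add: abs_le_iff)
        qed
        thus "f i x - (\<Sum>j\<in>UNIV. d i j x * u j x) \<le> K2" unfolding K2_def eq using fFm[of i x] by linarith
      qed
      show "\<forall>i x y. \<bar>u i x - u i y\<bar> \<le> L2 * dist x y" using L2 M vs KK by blast
    qed
  qed
  show ?thesis using part1 part2 by blast
qed

end
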